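(* Let $X\subseteq Q^*(\mathcal{G})$ be a hereditary class. Then the clique-width of graphs in $X$ is bounded by a constant if and only if the clique-width of the $Q$-graphs belonging to $X$ is bounded by a constant.
   Context: All graphs are finite, simple and undirected; $\mathcal{G}$ denotes the class of all such graphs. A class is hereditary if closed under taking induced subgraphs. For a graph $G=(V,E)$, $Q(G)$ is the graph with vertex set $V\cup E$ in which $V$ is a clique, $E$ is a clique, and $v\in V$ is adjacent to $e\in E$ iff $v$ is an endpoint of $e$ in $G$. A $Q$-graph is a graph isomorphic to $Q(G)$ for some graph $G$. For a class $Y$, $Q(Y)=\{Q(G):G\in Y\}$ and $Q^*(Y)$ is the set of all induced subgraphs of graphs in $Q(Y)$. *)

theory Defs
  imports Main
begin

type_synonym 'a graph = "'a set \<times> 'a set set"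

definition wf_graph :: "'a graph \<Rightarrow> bool" where
  "wf_graph G \<longleftrightarrow> finite (fst G) \<and>
     (\<forall>e\<in>snd G. \<exists>u v. e = {u, v} \<and> u \<noteq> v \<and> u \<in> fst G \<and> v \<in> fst G)"

definition induced_subgraph :: "'a graph \<Rightarrow> 'a graph \<Rightarrow> bool" where
  "induced_subgraph H G \<longleftrightarrow>
     (\<exists>S. S \<subseteq> fst G \<and> H = (S, {e\<in>snd G. e \<subseteq> S}))"

definition graph_iso :: "'a graph \<Rightarrow> 'b graph \<Rightarrow> bool" where
  "graph_iso G H \<longleftrightarrow> (\<exists>f. bij_betw f (fst G) (fst H) \<and>
     (\<forall>u\<in>fst G. \<forall>v\<in>fst G. {u, v} \<in> snd G \<longleftrightarrow> {f u, f v} \<in> snd H))"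

definition Qg :: "'a graph \<Rightarrow> ('a + 'a set) graph" where
  "Qg G = (Inl ` fst G \<union> Inr ` snd G,
     {{Inl u, Inl v} | u v. u \<in> fst G \<and> v \<in> fst G \<and> u \<noteq> v}
     \<union> {{Inr e, Inr f} | e f. e \<in> snd G \<and> f \<in> snd G \<and> e \<noteq> f}
     \<union> {{Inl v, Inr e} | v e. v \<in> fst G \<and> e \<in> snd G \<and> v \<in> e})"

definition all_graphs :: "nat graph set" where
  "all_graphs = {G. wf_graph G}"

definition is_Qgraph :: "nat graph \<Rightarrow> bool" where
  "is_Qgraph H \<longleftrightarrow> wf_graph H \<and> (\<exists>G\<in>all_graphs. graph_iso H (Qg G))"

definition Qstar_all :: "nat graph set" where
  "Qstar_all = {H. wf_graph H \<and> (\<exists>G\<in>all_graphs. \<exists>H'. induced_subgraph H' (Qg G)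
                                     \<and> graph_iso H H')}"

definition hereditary :: "'a graph set \<Rightarrow> bool" where
  "hereditary X \<longleftrightarrow> (\<forall>G\<in>X. \<forall>H. induced_subgraph H G \<longrightarrow> H \<in> X)"

inductive_set kexp :: "nat \<Rightarrow> ('a set \<times> 'a set set \<times> ('a \<Rightarrow> nat)) set"
  for k :: nat where
  single: "i < k \<Longrightarrow> ({v}, {}, \<lambda>_. i) \<in> kexp k"
| union: "(V1, E1, l1) \<in> kexp k \<Longrightarrow> (V2, E2, l2) \<in> kexp k \<Longrightarrow> V1 \<inter> V2 = {} \<Longrightarrow>
          (V1 \<union> V2, E1 \<union> E2, \<lambda>x. if x \<in> V1 then l1 x else l2 x) \<in> kexp k"
| join: "(V, E, l) \<in> kexp k \<Longrightarrow> i < k \<Longrightarrow> j < k \<Longrightarrow> i \<noteq> j \<Longrightarrow>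
          (V, E \<union> {{u, v} | u v. u \<in> V \<and> v \<in> V \<and> l u = i \<and> l v = j}, l) \<in> kexp k"
| relabel: "(V, E, l) \<in> kexp k \<Longrightarrow> i < k \<Longrightarrow> j < k \<Longrightarrow>
          (V, E, \<lambda>x. if l x = i then j else l x) \<in> kexp k"

definition cw_le :: "nat \<Rightarrow> 'a graph \<Rightarrow> bool" where
  "cw_le k G \<longleftrightarrow> (\<exists>l. (fst G, snd G, l) \<in> kexp k)"

definition clique_width :: "'a graph \<Rightarrow> nat" where
  "clique_width G = (LEAST k. cw_le k G)"

end

theory Submission
  imports Defs
begin


definition cwl :: "nat \<Rightarrow> 'a set \<Rightarrow> 'a set set \<Rightarrow> ('a \<Rightarrow> nat) \<Rightarrow> bool" where
  "cwl k V E l \<longleftrightarrow> (\<exists>l'. (V,E,l') \<in> kexp k \<and> (\<forall>x\<in>V. l' x = l x))"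

lemma kexp_inv:
  "(V,E,l) \<in> kexp k \<Longrightarrow> finite V \<and> V \<noteq> {} \<and> (\<forall>x\<in>V. l x < k) \<and> (\<forall>e\<in>E. e \<subseteq> V)"
  by (induction rule: kexp.induct) auto

lemma cwl_inv:
  "cwl k V E l \<Longrightarrow> finite V \<and> V \<noteq> {} \<and> (\<forall>x\<in>V. l x < k) \<and> (\<forall>e\<in>E. e \<subseteq> V)"
  unfolding cwl_def using kexp_inv by fastforce

lemma cwl_cong: "cwl k V E l \<Longrightarrow> (\<And>x. x\<in>V \<Longrightarrow> l x = m x) \<Longrightarrow> cwl k V E m"
  unfolding cwl_def by auto

lemma cwl_single: "l v < k \<Longrightarrow> cwl k {v} {} l"
  unfolding cwl_def by (rule exI[of _ "\<lambda>_. l v"]) (auto intro: kexp.single)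

lemma cwl_union: "cwl k V1 E1 l1 \<Longrightarrow> cwl k V2 E2 l2 \<Longrightarrow> V1 \<inter> V2 = {} \<Longrightarrow>
   cwl k (V1 \<union> V2) (E1 \<union> E2) (\<lambda>x. if x\<in>V1 then l1 x else l2 x)"
  unfolding cwl_def
proof (elim exE conjE)
  fix a b assume "(V1, E1, a) \<in> kexp k" "\<forall>x\<in>V1. a x = l1 x" "(V2, E2, b) \<in> kexp k"
    "\<forall>x\<in>V2. b x = l2 x" "V1 \<inter> V2 = {}"
  then show "\<exists>l'. (V1 \<union> V2, E1 \<union> E2, l') \<in> kexp k \<and>
          (\<forall>x\<in>V1 \<union> V2. l' x = (if x \<in> V1 then l1 x else l2 x))"
    by (intro exI[of _ "\<lambda>x. if x \<in> V1 then a x else b x"]) (auto intro: kexp.union)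
qed

lemma cwl_join: "cwl k V E l \<Longrightarrow> i < k \<Longrightarrow> j < k \<Longrightarrow> i \<noteq> j \<Longrightarrow>
   cwl k V (E \<union> {{u,v}|u v. u\<in>V \<and> v\<in>V \<and> l u = i \<and> l v = j}) l"
  unfolding cwl_def
proof (elim exE conjE)
  fix a assume a: "(V, E, a) \<in> kexp k" "\<forall>x\<in>V. a x = l x" "i < k" "j < k" "i \<noteq> j"
  have "{{u,v}|u v. u\<in>V \<and> v\<in>V \<and> l u = i \<and> l v = j} = {{u,v}|u v. u\<in>V \<and> v\<in>V \<and> a u = i \<and> a v = j}"
    using a(2) by metis
  then show "\<exists>l'. (V, E \<union> {{u,v}|u v. u\<in>V \<and> v\<in>V \<and> l u = i \<and> l v = j}, l') \<in> kexp k \<and> (\<forall>x\<in>V. l' x = l x)"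
    using a kexp.join[OF a(1) a(3-5)] by auto
qed

lemma cwl_relabel: "cwl k V E l \<Longrightarrow> j < k \<Longrightarrow> cwl k V E (\<lambda>x. if l x = i then j else l x)"
proof -
  assume c: "cwl k V E l" "j < k"
  show ?thesis
  proof (cases "i < k")
    case True
    from c(1) obtain a where a: "(V, E, a) \<in> kexp k" "\<forall>x\<in>V. a x = l x" unfolding cwl_def by auto
    show ?thesis unfolding cwl_def
      using a kexp.relabel[OF a(1) True c(2)] by (intro exI[of _ "\<lambda>x. if a x = i then j else a x"]) auto
  next
    case False
    with cwl_inv[OF c(1)] show ?thesis by (intro cwl_cong[OF c(1)]) auto
  qed
qed

lemma kexp_mono: "(V,E,l) \<in> kexp k \<Longrightarrow> k \<le> k' \<Longrightarrow> (V,E,l) \<in> kexp k'"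
  by (induction rule: kexp.induct) (auto intro: kexp.intros)

lemma cwl_mono: "cwl k V E l \<Longrightarrow> k \<le> k' \<Longrightarrow> cwl k' V E l"
  unfolding cwl_def using kexp_mono by blast

lemma cw_le_iff: "cw_le k G \<longleftrightarrow> (\<exists>l. cwl k (fst G) (snd G) l)"
  unfolding cw_le_def cwl_def by auto



lemma cwl_add_edges:
  assumes c: "cwl k V E0 l" and inj: "inj_on l V" and fin: "finite N"
    and N: "\<forall>e\<in>N. \<exists>u v. e = {u,v} \<and> u \<noteq> v \<and> u \<in> V \<and> v \<in> V"
  shows "cwl k V (E0 \<union> N) l"
  using fin N
proof (induction N rule: finite_induct)
  case empty then show ?case using c by simp
next
  case (insert e N)
  then obtain u v where e: "e = {u,v}" "u \<noteq> v" "u \<in> V" "v \<in> V" by blast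
  have IH: "cwl k V (E0 \<union> N) l" using insert by auto
  have lt: "l u < k" "l v < k" using cwl_inv[OF IH] e by auto
  have ne: "l u \<noteq> l v" using inj e inj_on_eq_iff by metis
  have "{{a,b}|a b. a\<in>V \<and> b\<in>V \<and> l a = l u \<and> l b = l v} = {e}"
  proof -
    have "a = u" if "a \<in> V" "l a = l u" for a using inj that e inj_on_eq_iff by metis
    moreover have "b = v" if "b \<in> V" "l b = l v" for b using inj that e inj_on_eq_iff by metis
    ultimately show ?thesis using e by blast
  qed
  with cwl_join[OF IH lt ne] show ?case by (simp add: insert_commute)
qed

lemma cwl_any:
  assumes "finite V" "V \<noteq> {}" "\<forall>e\<in>E. \<exists>u v. e = {u,v} \<and> u \<noteq> v \<and> u \<in> V \<and> v \<in> V"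
    "inj_on l V" "\<forall>x\<in>V. l x < k"
  shows "cwl k V E l"
  using assms
proof (induction V arbitrary: E rule: finite_ne_induct)
  case (singleton x)
  then have "E = {}" by auto
  then show ?case using singleton cwl_single by auto
next
  case (insert x F)
  define EF where "EF = {e\<in>E. e \<subseteq> F}"
  have IH: "cwl k F EF l"
  proof (rule insert.IH)
    show "\<forall>e\<in>EF. \<exists>u v. e = {u,v} \<and> u \<noteq> v \<and> u \<in> F \<and> v \<in> F"
      using insert.prems(1) unfolding EF_def by fastforce
    show "inj_on l F" using insert.prems(2) by (auto simp: inj_on_insert)
    show "\<forall>x\<in>F. l x < k" using insert.prems(3) by auto
  qed
  have s: "cwl k {x} {} l" using insert by (auto intro: cwl_single)
  have u: "cwl k (F \<union> {x}) (EF \<union> {}) l"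
    using cwl_union[OF IH s] insert by (auto elim!: cwl_cong)
  have finE: "finite E"
  proof -
    have "E \<subseteq> Pow (insert x F)" using insert.prems by auto
    then show ?thesis using insert.hyps finite_subset by blast
  qed
  have "cwl k (insert x F) (EF \<union> (E - EF)) l"
    using u insert.prems finE
    by (intro cwl_add_edges) (auto simp: EF_def)
  moreover have "EF \<union> (E - EF) = E" unfolding EF_def by auto
  ultimately show ?case by simp
qed

lemma wf_cw_le:
  assumes "wf_graph G" "fst G \<noteq> {}"
  shows "cw_le (card (fst G)) G"
proof -
  have f: "finite (fst G)" using assms unfolding wf_graph_def by auto
  obtain g where g: "bij_betw g (fst G) {..<card (fst G)}"
    using f by (metis ex_bij_betw_finite_nat atLeast0LessThan)
  have "cwl (card (fst G)) (fst G) (snd G) g"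
    using assms f g unfolding wf_graph_def
    by (intro cwl_any) (auto simp: bij_betw_def)
  then show ?thesis unfolding cw_le_iff by auto
qed



lemma kexp_map:
  "(V,E,l) \<in> kexp k \<Longrightarrow> inj_on f V \<Longrightarrow> (\<forall>x\<in>V. m (f x) = l x) \<Longrightarrow> cwl k (f`V) ((`) f ` E) m"
proof (induction arbitrary: m rule: kexp.induct)
  case (single i v)
  then show ?case by (auto intro: cwl_single)
next
  case (union V1 E1 l1 V2 E2 l2)
  have i1: "inj_on f V1" "inj_on f V2" using union.prems(1) by (auto intro: inj_on_subset)
  have c1: "cwl k (f`V1) ((`) f ` E1) m" using union.IH(1)[OF i1(1)] union.prems(2) by auto
  have "m (f x) = l2 x" if "x \<in> V2" for x
  proof -
    have "x \<notin> V1" using that union.hyps(3) by auto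
    then show ?thesis using union.prems(2) that by auto
  qed
  then have c2: "cwl k (f`V2) ((`) f ` E2) m" using union.IH(2)[OF i1(2)] by auto
  have d: "f`V1 \<inter> f`V2 = {}" using union.prems(1) union.hyps(3) by (auto simp: inj_on_def)
  from cwl_union[OF c1 c2 d] show ?case by (auto simp: image_Un elim!: cwl_cong)
next
  case (join V E l i j)
  have c: "cwl k (f`V) ((`) f ` E) m" using join by auto
  have "(`) f ` {{u, v} |u v. u \<in> V \<and> v \<in> V \<and> l u = i \<and> l v = j}
      = {{u, v} |u v. u \<in> f`V \<and> v \<in> f`V \<and> m u = i \<and> m v = j}" (is "?L = ?R")
  proof
    show "?L \<subseteq> ?R"
    proof
      fix e assume "e \<in> ?L"
      then obtain u v where "e = f ` {u,v}" "u \<in> V" "v \<in> V" "l u = i" "l v = j" by blast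
      then show "e \<in> ?R" using join.prems(2) by auto
    qed
    show "?R \<subseteq> ?L"
    proof
      fix e assume "e \<in> ?R"
      then obtain u v where uv: "e = {f u, f v}" "u \<in> V" "v \<in> V" "m (f u) = i" "m (f v) = j" by blast
      then have "{u,v} \<in> {{u, v} |u v. u \<in> V \<and> v \<in> V \<and> l u = i \<and> l v = j}"
        using join.prems(2) by auto
      moreover have "e = f ` {u,v}" using uv by auto
      ultimately show "e \<in> ?L" by blast
    qed
  qed
  then show ?case using cwl_join[OF c join.hyps(2-4)] by (simp add: image_Un)
next
  case (relabel V E l i j)
  define m' where "m' = (\<lambda>y. l (inv_into V f y))"
  have "\<forall>x\<in>V. m' (f x) = l x" using relabel.prems(1) by (simp add: m'_def)
  then have c: "cwl k (f`V) ((`) f ` E) m'" using relabel by auto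
  show ?case using cwl_relabel[OF c relabel.hyps(3), of i] relabel.prems
    by (elim cwl_cong) (auto simp: m'_def)
qed

lemma cwl_map:
  assumes "cwl k V E l" "inj_on f V"
  shows "cwl k (f`V) ((`) f ` E) (\<lambda>y. l (inv_into V f y))"
proof -
  obtain a where a: "(V,E,a) \<in> kexp k" "\<forall>x\<in>V. a x = l x" using assms(1) unfolding cwl_def by auto
  show ?thesis by (rule kexp_map[OF a(1) assms(2)]) (use a assms(2) in auto)
qed



definition cross :: "'v set \<Rightarrow> 'v set \<Rightarrow> 'v set set" where
  "cross S T = {{u,v}|u v. u\<in>S \<and> v\<in>T}"
lemma join_set: "(\<And>x. x\<in>W \<Longrightarrow> m x = i \<longleftrightarrow> x \<in> S) \<Longrightarrow> (\<And>x. x\<in>W \<Longrightarrow> m x = j \<longleftrightarrow> x \<in> T) \<Longrightarrow> S \<subseteq> W \<Longrightarrow> T \<subseteq> W \<Longrightarrow>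
   {{u,v}|u v. u\<in>W \<and> v\<in>W \<and> m u = i \<and> m v = j} = cross S T"
  unfolding cross_def by blast
definition cliq :: "'v set \<Rightarrow> 'v set set" where
  "cliq S = {{p,q}|p q. p\<in>S \<and> q\<in>S \<and> p\<noteq>q}"
lemma cliq_empty[simp]: "cliq {} = {}" by (auto simp: cliq_def)
lemma cliq_insert: "p \<notin> Q \<Longrightarrow> cliq (insert p Q) = cliq Q \<union> cross {p} Q"
  unfolding cliq_def cross_def by (auto simp: insert_commute)
lemma cliq_Un: "S \<inter> T = {} \<Longrightarrow> cliq (S \<union> T) = cliq S \<union> cliq T \<union> cross S T"
  unfolding cliq_def cross_def by (auto simp: insert_commute) blast+
lemma cross_single: "cross {p} {v} = {{p,v}}" unfolding cross_def by auto

definition att :: "'v set \<Rightarrow> ('v \<Rightarrow> 'v) \<Rightarrow> 'v set \<Rightarrow> 'v set set" where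
  "att F h S = {{p, h p}|p. p \<in> S \<inter> F}"
lemma att_empty[simp]: "att F h {} = {}" by (auto simp: att_def)
lemma att_insert: "att F h (insert p Q) = att F h Q \<union> (if p \<in> F then {{p, h p}} else {})"
  by (auto simp: att_def)
lemma att_Un: "att F h (S \<union> T) = att F h S \<union> att F h T"
  by (auto simp: att_def)

lemma leaf:
  assumes "finite Q" "v \<notin> Q" "\<forall>p\<in>Q. h p = v" "a < K" "pl < K" "t < K" "a \<noteq> pl" "t \<noteq> pl" "t \<noteq> a"
  shows "cwl K (insert v Q) (cliq Q \<union> att F h Q) (\<lambda>x. if x = v then a else pl)"
  using assms(1,2,3)
proof (induction Q rule: finite_induct)
  case empty
  then show ?case using assms by (auto intro: cwl_single)
next
  case (insert p Q)
  let ?m = "\<lambda>x. if x = v then a else pl"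
  have IH: "cwl K (insert v Q) (cliq Q \<union> att F h Q) ?m" using insert by auto
  have s: "cwl K {p} {} (\<lambda>_. t)" using assms by (auto intro: cwl_single)
  have pv: "p \<noteq> v" "h p = v" using insert by auto
  define m1 where "m1 = (\<lambda>x. if x \<in> insert v Q then ?m x else t)"
  let ?W = "insert v Q \<union> {p}"
  have u: "cwl K ?W (cliq Q \<union> att F h Q \<union> {}) m1"
    unfolding m1_def by (rule cwl_union[OF IH s]) (use insert pv in auto)
  have j1: "cwl K ?W (cliq Q \<union> att F h Q \<union> cross {p} Q) m1"
    using cwl_join[OF u assms(6,5,8)]
    by (subst (asm) join_set[where S="{p}" and T=Q]) (use assms insert pv in \<open>auto simp: m1_def\<close>)
  have j2: "cwl K ?W (cliq Q \<union> att F h Q \<union> cross {p} Q \<union> (if p \<in> F then {{p,h p}} else {})) m1"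
  proof (cases "p \<in> F")
    case True
    show ?thesis using cwl_join[OF j1 assms(6,4,9)] True
      by (subst (asm) join_set[where S="{p}" and T="{v}"]) (use assms insert pv in \<open>auto simp: m1_def cross_single\<close>)
  next
    case False then show ?thesis using j1 by simp
  qed
  have r: "cwl K ?W (cliq Q \<union> att F h Q \<union> cross {p} Q \<union> (if p \<in> F then {{p,h p}} else {}))
     (\<lambda>x. if m1 x = t then pl else m1 x)"
    by (rule cwl_relabel[OF j2 assms(5)])
  have e3: "cliq Q \<union> att F h Q \<union> cross {p} Q \<union> (if p \<in> F then {{p,h p}} else {})
      = cliq (insert p Q) \<union> att F h (insert p Q)"
    using insert by (auto simp: cliq_insert att_insert)
  have e4: "?W = insert v (insert p Q)" by auto
  have r': "cwl K (insert v (insert p Q)) (cliq (insert p Q) \<union> att F h (insert p Q))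
     (\<lambda>x. if m1 x = t then pl else m1 x)" using r unfolding e3 e4 .
  show ?case
  proof (rule cwl_cong[OF r'])
    fix x assume "x \<in> insert v (insert p Q)"
    then show "(if m1 x = t then pl else m1 x) = (if x = v then a else pl)"
      using assms insert pv by (auto simp: m1_def)
  qed
qed



definition pv :: "'v set \<Rightarrow> ('v \<Rightarrow> 'v) \<Rightarrow> 'v set \<Rightarrow> 'v set" where
  "pv P h V = {p\<in>P. h p \<in> V}"

definition lab :: "'v set \<Rightarrow> 'v set \<Rightarrow> nat \<Rightarrow> ('v \<Rightarrow> nat) \<Rightarrow> 'v \<Rightarrow> nat" where
  "lab A B k l x = (if x\<in>A then l x else if x\<in>B then k + l x else 2*k)"

lemma cross_Un1: "cross (S1 \<union> S2) T = cross S1 T \<union> cross S2 T" unfolding cross_def by blast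
lemma cross_Un2: "cross S (T1 \<union> T2) = cross S T1 \<union> cross S T2" unfolding cross_def by blast

lemma cwl_join_set: "cwl k V E l \<Longrightarrow> i<k \<Longrightarrow> j<k \<Longrightarrow> i\<noteq>j \<Longrightarrow>
  (\<And>x. x\<in>V \<Longrightarrow> l x = i \<longleftrightarrow> x\<in>S) \<Longrightarrow> (\<And>x. x\<in>V \<Longrightarrow> l x = j \<longleftrightarrow> x\<in>T) \<Longrightarrow> S\<subseteq>V \<Longrightarrow> T\<subseteq>V \<Longrightarrow>
  cwl k V (E \<union> cross S T) l"
  using cwl_join[of k V E l i j] join_set[of V l i S j T] by simp

lemma pv_Un: "pv P h (V1 \<union> V2) = pv P h V1 \<union> pv P h V2" unfolding pv_def by auto

lemma constr:
  assumes "(V,E,l) \<in> kexp k" "V \<subseteq> A \<union> B" and AB: "A \<inter> B = {}" and PAB: "P \<inter> (A \<union> B) = {}"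
    and finP: "finite P"
  shows "cwl (2*k+2) (V \<union> pv P h V) (E \<union> cliq (pv P h V) \<union> att F h (pv P h V)) (lab A B k l)"
  using assms(1,2)
proof (induction rule: kexp.induct)
  case (single i v)
  let ?Q = "pv P h {v}"
  have "cwl (2*k+2) (insert v ?Q) (cliq ?Q \<union> att F h ?Q) (\<lambda>x. if x = v then (if v \<in> A then i else k+i) else 2*k)"
    by (rule leaf[where t="2*k+1"]) (use single PAB finP in \<open>auto simp: pv_def\<close>)
  then have "cwl (2*k+2) ({v} \<union> ?Q) ({} \<union> cliq ?Q \<union> att F h ?Q) (\<lambda>x. if x = v then (if v \<in> A then i else k+i) else 2*k)"
    by simp
  then show ?case
    by (rule cwl_cong) (use single PAB AB in \<open>auto simp: lab_def pv_def\<close>)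
next
  case (union V1 E1 l1 V2 E2 l2)
  let ?K = "2*k+2"
  let ?P1 = "pv P h V1" and ?P2 = "pv P h V2"
  let ?W1 = "V1 \<union> ?P1" and ?W2 = "V2 \<union> ?P2"
  have s1: "V1 \<subseteq> A \<union> B" "V2 \<subseteq> A \<union> B" using union.prems by auto
  have c1: "cwl ?K ?W1 (E1 \<union> cliq ?P1 \<union> att F h ?P1) (lab A B k l1)" using union.IH(1) s1 by auto
  have c2: "cwl ?K ?W2 (E2 \<union> cliq ?P2 \<union> att F h ?P2) (lab A B k l2)" using union.IH(2) s1 by auto
  have lt1: "\<forall>x\<in>V1. l1 x < k" and lt2: "\<forall>x\<in>V2. l2 x < k"
    using kexp_inv[OF union.hyps(1)] kexp_inv[OF union.hyps(2)] by auto
  define m2 where "m2 = (\<lambda>x. if lab A B k l2 x = 2*k then 2*k+1 else lab A B k l2 x)"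
  have c2': "cwl ?K ?W2 (E2 \<union> cliq ?P2 \<union> att F h ?P2) m2"
    unfolding m2_def by (rule cwl_relabel[OF c2]) simp
  define mu where "mu = (\<lambda>x. if x \<in> ?W1 then lab A B k l1 x else m2 x)"
  have d: "?W1 \<inter> ?W2 = {}" using union.hyps(3) PAB s1 by (auto simp: pv_def)
  have cu: "cwl ?K (?W1 \<union> ?W2) ((E1 \<union> cliq ?P1 \<union> att F h ?P1) \<union> (E2 \<union> cliq ?P2 \<union> att F h ?P2)) mu"
    unfolding mu_def by (rule cwl_union[OF c1 c2' d])
  have mu1: "mu x = 2*k \<longleftrightarrow> x \<in> ?P1" if "x \<in> ?W1 \<union> ?W2" for x
    using that d s1 lt1 lt2 PAB AB unfolding mu_def m2_def lab_def pv_def by auto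
  have mu2: "mu x = 2*k+1 \<longleftrightarrow> x \<in> ?P2" if "x \<in> ?W1 \<union> ?W2" for x
    using that d s1 lt1 lt2 PAB AB unfolding mu_def m2_def lab_def pv_def by auto
  have cj: "cwl ?K (?W1 \<union> ?W2) ((E1 \<union> cliq ?P1 \<union> att F h ?P1) \<union> (E2 \<union> cliq ?P2 \<union> att F h ?P2) \<union> cross ?P1 ?P2) mu"
    by (rule cwl_join_set[OF cu, of "2*k" "2*k+1"]) (use mu1 mu2 in auto)
  have cr: "cwl ?K (?W1 \<union> ?W2) ((E1 \<union> cliq ?P1 \<union> att F h ?P1) \<union> (E2 \<union> cliq ?P2 \<union> att F h ?P2) \<union> cross ?P1 ?P2)
     (\<lambda>x. if mu x = 2*k+1 then 2*k else mu x)"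
    by (rule cwl_relabel[OF cj]) simp
  have dP: "?P1 \<inter> ?P2 = {}" using union.hyps(3) by (auto simp: pv_def)
  have eE: "(E1 \<union> cliq ?P1 \<union> att F h ?P1) \<union> (E2 \<union> cliq ?P2 \<union> att F h ?P2) \<union> cross ?P1 ?P2
     = (E1 \<union> E2) \<union> cliq (pv P h (V1 \<union> V2)) \<union> att F h (pv P h (V1 \<union> V2))"
    unfolding pv_Un cliq_Un[OF dP] att_Un by blast
  have eW: "?W1 \<union> ?W2 = (V1 \<union> V2) \<union> pv P h (V1 \<union> V2)" unfolding pv_Un by blast
  have cr': "cwl ?K ((V1 \<union> V2) \<union> pv P h (V1 \<union> V2)) ((E1 \<union> E2) \<union> cliq (pv P h (V1 \<union> V2)) \<union> att F h (pv P h (V1 \<union> V2)))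
     (\<lambda>x. if mu x = 2*k+1 then 2*k else mu x)" using cr unfolding eE eW .
  show ?case
  proof (rule cwl_cong[OF cr'])
    fix x assume x: "x \<in> (V1 \<union> V2) \<union> pv P h (V1 \<union> V2)"
    show "(if mu x = 2*k+1 then 2*k else mu x) = lab A B k (\<lambda>x. if x \<in> V1 then l1 x else l2 x) x"
      using x d s1 lt1 lt2 PAB AB union.hyps(3) unfolding mu_def m2_def lab_def pv_def by auto
  qed
next
  case (join V E l i j)
  let ?K = "2*k+2"
  let ?W = "V \<union> pv P h V"
  let ?m = "lab A B k l"
  have c: "cwl ?K ?W (E \<union> cliq (pv P h V) \<union> att F h (pv P h V)) ?m" using join by auto
  have lt: "\<forall>x\<in>V. l x < k" using kexp_inv[OF join.hyps(1)] by auto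
  define SA where "SA = {x\<in>V\<inter>A. l x = i}"
  define SB where "SB = {x\<in>V\<inter>B. l x = i}"
  define TA where "TA = {x\<in>V\<inter>A. l x = j}"
  define TB where "TB = {x\<in>V\<inter>B. l x = j}"
  have fSA: "?m x = i \<longleftrightarrow> x \<in> SA" if "x \<in> ?W" for x
    using that join.prems lt PAB AB join.hyps unfolding SA_def lab_def pv_def by auto
  have fSB: "?m x = k+i \<longleftrightarrow> x \<in> SB" if "x \<in> ?W" for x
    using that join.prems lt PAB AB join.hyps unfolding SB_def lab_def pv_def by auto
  have fTA: "?m x = j \<longleftrightarrow> x \<in> TA" if "x \<in> ?W" for x
    using that join.prems lt PAB AB join.hyps unfolding TA_def lab_def pv_def by auto
  have fTB: "?m x = k+j \<longleftrightarrow> x \<in> TB" if "x \<in> ?W" for x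
    using that join.prems lt PAB AB join.hyps unfolding TB_def lab_def pv_def by auto
  have sub: "SA \<subseteq> ?W" "SB \<subseteq> ?W" "TA \<subseteq> ?W" "TB \<subseteq> ?W" unfolding SA_def SB_def TA_def TB_def by auto
  have c1: "cwl ?K ?W (E \<union> cliq (pv P h V) \<union> att F h (pv P h V) \<union> cross SA TA) ?m"
    by (rule cwl_join_set[OF c, of i j]) (use join.hyps fSA fTA sub in auto)
  have c2: "cwl ?K ?W (E \<union> cliq (pv P h V) \<union> att F h (pv P h V) \<union> cross SA TA \<union> cross SA TB) ?m"
    by (rule cwl_join_set[OF c1, of i "k+j"]) (use join.hyps fSA fTB sub in auto)
  have c3: "cwl ?K ?W (E \<union> cliq (pv P h V) \<union> att F h (pv P h V) \<union> cross SA TA \<union> cross SA TB \<union> cross SB TA) ?m"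
    by (rule cwl_join_set[OF c2, of "k+i" j]) (use join.hyps fSB fTA sub in auto)
  have c4: "cwl ?K ?W (E \<union> cliq (pv P h V) \<union> att F h (pv P h V) \<union> cross SA TA \<union> cross SA TB \<union> cross SB TA \<union> cross SB TB) ?m"
    by (rule cwl_join_set[OF c3, of "k+i" "k+j"]) (use join.hyps fSB fTB sub in auto)
  have "{{u, v} |u v. u \<in> V \<and> v \<in> V \<and> l u = i \<and> l v = j} = cross (SA \<union> SB) (TA \<union> TB)"
    by (rule join_set) (use join.prems in \<open>auto simp: SA_def SB_def TA_def TB_def\<close>)
  then have "E \<union> {{u, v} |u v. u \<in> V \<and> v \<in> V \<and> l u = i \<and> l v = j} \<union> cliq (pv P h V) \<union> att F h (pv P h V)
     = E \<union> cliq (pv P h V) \<union> att F h (pv P h V) \<union> cross SA TA \<union> cross SA TB \<union> cross SB TA \<union> cross SB TB"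
    unfolding cross_Un1 cross_Un2 by blast
  then show ?case using c4 by simp
next
  case (relabel V E l i j)
  let ?K = "2*k+2"
  let ?W = "V \<union> pv P h V"
  let ?m = "lab A B k l"
  have c: "cwl ?K ?W (E \<union> cliq (pv P h V) \<union> att F h (pv P h V)) ?m" using relabel by auto
  have lt: "\<forall>x\<in>V. l x < k" using kexp_inv[OF relabel.hyps(1)] by auto
  define m1 where "m1 = (\<lambda>x. if ?m x = i then j else ?m x)"
  have c1: "cwl ?K ?W (E \<union> cliq (pv P h V) \<union> att F h (pv P h V)) m1"
    unfolding m1_def by (rule cwl_relabel[OF c]) (use relabel.hyps in auto)
  have c2: "cwl ?K ?W (E \<union> cliq (pv P h V) \<union> att F h (pv P h V)) (\<lambda>x. if m1 x = k+i then k+j else m1 x)"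
    by (rule cwl_relabel[OF c1]) (use relabel.hyps in auto)
  show ?case
  proof (rule cwl_cong[OF c2])
    fix x assume "x \<in> ?W"
    then show "(if m1 x = k+i then k+j else m1 x) = lab A B k (\<lambda>x. if l x = i then j else l x) x"
      using relabel.prems relabel.hyps lt PAB AB unfolding m1_def lab_def pv_def by auto
  qed
qed



lemma extend:
  assumes c: "cwl k (A \<union> B) EQ l" and AB: "A \<inter> B = {}" and PAB: "P \<inter> (A \<union> B) = {}"
    and finP: "finite P" and hP: "\<forall>p\<in>P. h p \<in> A \<union> B"
  shows "\<exists>m. cwl (2*k+2) (A \<union> B \<union> P) (EQ \<union> cliq P \<union> att F h P \<union> cross P B) m"
proof -
  obtain l' where l': "(A \<union> B, EQ, l') \<in> kexp k" using c unfolding cwl_def by auto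
  have lt: "\<forall>x\<in>A\<union>B. l' x < k" using kexp_inv[OF l'] by auto
  have ltA: "\<And>x. x \<in> A \<Longrightarrow> l' x < k" and ltB: "\<And>x. x \<in> B \<Longrightarrow> l' x < k" using lt by auto
  have pvP: "pv P h (A \<union> B) = P" using hP unfolding pv_def by auto
  let ?W = "A \<union> B \<union> P"
  let ?m = "lab A B k l'"
  have c0: "cwl (2*k+2) ?W (EQ \<union> cliq P \<union> att F h P) ?m"
    using constr[OF l' _ AB PAB finP, of h F] unfolding pvP by simp
  have "n \<le> k \<Longrightarrow> cwl (2*k+2) ?W (EQ \<union> cliq P \<union> att F h P \<union> cross P {b\<in>B. l' b < n}) ?m" for n
  proof (induction n)
    case 0
    have "cross P {b\<in>B. l' b < 0} = {}" unfolding cross_def by auto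
    then show ?case using c0 by simp
  next
    case (Suc n)
    then have IH: "cwl (2*k+2) ?W (EQ \<union> cliq P \<union> att F h P \<union> cross P {b\<in>B. l' b < n}) ?m" by auto
    have j: "cwl (2*k+2) ?W (EQ \<union> cliq P \<union> att F h P \<union> cross P {b\<in>B. l' b < n} \<union> cross P {b\<in>B. l' b = n}) ?m"
    proof (rule cwl_join_set[OF IH, of "2*k" "k+n"])
      show "2*k < 2*k+2" "k+n < 2*k+2" "2*k \<noteq> k+n" using Suc by auto
      show "?m x = 2*k \<longleftrightarrow> x \<in> P" if "x \<in> ?W" for x
        using that ltA ltB PAB AB unfolding lab_def by (auto dest: ltA ltB)
      show "?m x = k+n \<longleftrightarrow> x \<in> {b\<in>B. l' b = n}" if "x \<in> ?W" for x
        using that ltA ltB PAB AB Suc.prems unfolding lab_def by (auto dest: ltA ltB)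
    qed auto
    have "cross P {b\<in>B. l' b < n} \<union> cross P {b\<in>B. l' b = n} = cross P {b\<in>B. l' b < Suc n}"
    proof -
      have "{b\<in>B. l' b < n} \<union> {b\<in>B. l' b = n} = {b\<in>B. l' b < Suc n}" by auto
      then show ?thesis by (simp add: cross_Un2[symmetric])
    qed
    then show ?case using j by (simp add: Un_assoc)
  qed
  from this[of k] have "cwl (2*k+2) ?W (EQ \<union> cliq P \<union> att F h P \<union> cross P {b\<in>B. l' b < k}) ?m" by simp
  moreover have "{b\<in>B. l' b < k} = B" using lt by auto
  ultimately show ?thesis by auto
qed



lemma wf_Qg: "wf_graph G \<Longrightarrow> wf_graph (Qg G)"
proof -
  assume w: "wf_graph G"
  have fV: "finite (fst G)" using w unfolding wf_graph_def by auto
  have "snd G \<subseteq> Pow (fst G)" using w unfolding wf_graph_def by auto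
  then have fE: "finite (snd G)" using fV finite_subset by blast
  have f: "finite (fst (Qg G))" using fV fE by (simp add: Qg_def)
  have "\<exists>u v. e = {u,v} \<and> u \<noteq> v \<and> u \<in> fst (Qg G) \<and> v \<in> fst (Qg G)" if e: "e \<in> snd (Qg G)" for e
  proof -
    from e consider (a) u v where "e = {Inl u, Inl v}" "u \<in> fst G" "v \<in> fst G" "u \<noteq> v"
      | (b) d d' where "e = {Inr d, Inr d'}" "d \<in> snd G" "d' \<in> snd G" "d \<noteq> d'"
      | (c) v d where "e = {Inl v, Inr d}" "v \<in> fst G" "d \<in> snd G"
      unfolding Qg_def by auto
    then show ?thesis
    proof cases
      case a then show ?thesis by (intro exI[of _ "Inl u"] exI[of _ "Inl v"]) (auto simp: Qg_def)
    next
      case b then show ?thesis by (intro exI[of _ "Inr d"] exI[of _ "Inr d'"]) (auto simp: Qg_def)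
    next
      case c then show ?thesis by (intro exI[of _ "Inl v"] exI[of _ "Inr d"]) (auto simp: Qg_def)
    qed
  qed
  then show ?thesis using f unfolding wf_graph_def by blast
qed

lemma wf_induced: "wf_graph G \<Longrightarrow> induced_subgraph H G \<Longrightarrow> wf_graph H"
proof -
  assume w: "wf_graph G" and i: "induced_subgraph H G"
  then obtain S where S: "S \<subseteq> fst G" "H = (S, {e\<in>snd G. e \<subseteq> S})" unfolding induced_subgraph_def by auto
  have "finite S" using S w finite_subset unfolding wf_graph_def by blast
  moreover have "\<forall>e\<in>{e\<in>snd G. e \<subseteq> S}. \<exists>u v. e = {u,v} \<and> u \<noteq> v \<and> u \<in> S \<and> v \<in> S"
  proof
    fix e assume e: "e \<in> {e\<in>snd G. e \<subseteq> S}"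
    then obtain u v where "e = {u,v}" "u \<noteq> v" using w unfolding wf_graph_def by blast
    then show "\<exists>u v. e = {u,v} \<and> u \<noteq> v \<and> u \<in> S \<and> v \<in> S" using e by blast
  qed
  ultimately show ?thesis using S unfolding wf_graph_def by simp
qed

lemma iso_edges:
  assumes "wf_graph G1" "wf_graph G2" "bij_betw f (fst G1) (fst G2)"
    "\<forall>u\<in>fst G1. \<forall>v\<in>fst G1. {u,v} \<in> snd G1 \<longleftrightarrow> {f u, f v} \<in> snd G2"
  shows "snd G2 = (`) f ` snd G1"
proof
  show "snd G2 \<subseteq> (`) f ` snd G1"
  proof
    fix e assume e: "e \<in> snd G2"
    then obtain x y where xy: "e = {x,y}" "x \<in> fst G2" "y \<in> fst G2" using assms(2) unfolding wf_graph_def by blast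
    then obtain u v where uv: "u \<in> fst G1" "v \<in> fst G1" "x = f u" "y = f v"
      using assms(3) unfolding bij_betw_def by blast
    then have "{u,v} \<in> snd G1" using assms(4) e xy by auto
    then show "e \<in> (`) f ` snd G1" using xy uv by (auto intro!: image_eqI[of _ _ "{u,v}"])
  qed
  show "(`) f ` snd G1 \<subseteq> snd G2"
  proof
    fix e assume "e \<in> (`) f ` snd G1"
    then obtain d where d: "d \<in> snd G1" "e = f ` d" by blast
    then obtain u v where uv: "d = {u,v}" "u \<in> fst G1" "v \<in> fst G1" using assms(1) unfolding wf_graph_def by blast
    then show "e \<in> snd G2" using assms(4) d by auto
  qed
qed

lemma cw_le_transfer:
  assumes "cw_le k G1" "bij_betw f (fst G1) (fst G2)" "snd G2 = (`) f ` snd G1"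
  shows "cw_le k G2"
proof -
  obtain l where "cwl k (fst G1) (snd G1) l" using assms(1) unfolding cw_le_iff by auto
  from cwl_map[OF this, of f] assms(2,3) show ?thesis unfolding cw_le_iff bij_betw_def by auto
qed

lemma cw_le_cw: "cw_le k G \<Longrightarrow> clique_width G \<le> k"
  unfolding clique_width_def by (rule Least_le)

lemma cw_exists: "wf_graph G \<Longrightarrow> fst G \<noteq> {} \<Longrightarrow> cw_le (clique_width G) G"
  unfolding clique_width_def by (rule LeastI) (rule wf_cw_le)

lemma cw_le_mono: "cw_le k G \<Longrightarrow> k \<le> k' \<Longrightarrow> cw_le k' G"
  unfolding cw_le_iff using cwl_mono by blast



lemma snd_Qg: "snd (Qg G) = {{Inl u, Inl v} |u v. u \<in> fst G \<and> v \<in> fst G \<and> u \<noteq> v}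
     \<union> {{Inr e, Inr f} |e f. e \<in> snd G \<and> f \<in> snd G \<and> e \<noteq> f}
     \<union> {{Inl v, Inr e} |v e. v \<in> fst G \<and> e \<in> snd G \<and> v \<in> e}"
  by (simp add: Qg_def)

lemma fst_Qg: "fst (Qg G) = Inl ` fst G \<union> Inr ` snd G"
  by (simp add: Qg_def)

lemma Qg_cases:
  assumes "e \<in> snd (Qg G)"
  obtains (LL) u v where "e = {Inl u, Inl v}" "u \<in> fst G" "v \<in> fst G" "u \<noteq> v"
  | (RR) a b where "e = {Inr a, Inr b}" "a \<in> snd G" "b \<in> snd G" "a \<noteq> b"
  | (LR) u a where "e = {Inl u, Inr a}" "u \<in> fst G" "a \<in> snd G" "u \<in> a"
proof -
  from assms consider "e \<in> {{Inl u, Inl v} |u v. u \<in> fst G \<and> v \<in> fst G \<and> u \<noteq> v}"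
     | "e \<in> {{Inr e, Inr f} |e f. e \<in> snd G \<and> f \<in> snd G \<and> e \<noteq> f}"
     | "e \<in> {{Inl v, Inr e} |v e. v \<in> fst G \<and> e \<in> snd G \<and> v \<in> e}"
    unfolding snd_Qg by blast
  then show ?thesis
  proof cases
    case 1
    then obtain u v where "e = {Inl u, Inl v}" "u \<in> fst G" "v \<in> fst G" "u \<noteq> v" by blast
    then show ?thesis by (rule LL)
  next
    case 2
    then obtain a b where "e = {Inr a, Inr b}" "a \<in> snd G" "b \<in> snd G" "a \<noteq> b" by blast
    then show ?thesis by (rule RR)
  next
    case 3
    then obtain u a where "e = {Inl u, Inr a}" "u \<in> fst G" "a \<in> snd G" "u \<in> a" by blast
    then show ?thesis by (rule LR)
  qed
qed

lemma Qg_LL: "{Inl u, Inl v} \<in> snd (Qg G) \<longleftrightarrow> u \<in> fst G \<and> v \<in> fst G \<and> u \<noteq> v"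
proof
  assume "{Inl u, Inl v} \<in> snd (Qg G)"
  then show "u \<in> fst G \<and> v \<in> fst G \<and> u \<noteq> v"
    by (cases rule: Qg_cases) (auto simp: doubleton_eq_iff)
next
  assume "u \<in> fst G \<and> v \<in> fst G \<and> u \<noteq> v"
  then have "{Inl u, Inl v} \<in> {{Inl u, Inl v} |u v. u \<in> fst G \<and> v \<in> fst G \<and> u \<noteq> v}" by blast
  then show "{Inl u, Inl v} \<in> snd (Qg G)" unfolding snd_Qg by (intro UnI1)
qed

lemma Qg_RR: "{Inr a, Inr b} \<in> snd (Qg G) \<longleftrightarrow> a \<in> snd G \<and> b \<in> snd G \<and> a \<noteq> b"
proof
  assume "{Inr a, Inr b} \<in> snd (Qg G)"
  then show "a \<in> snd G \<and> b \<in> snd G \<and> a \<noteq> b"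
    by (cases rule: Qg_cases) (auto simp: doubleton_eq_iff)
next
  assume "a \<in> snd G \<and> b \<in> snd G \<and> a \<noteq> b"
  then have "{Inr a, Inr b} \<in> {{Inr e, Inr f} |e f. e \<in> snd G \<and> f \<in> snd G \<and> e \<noteq> f}" by blast
  then show "{Inr a, Inr b} \<in> snd (Qg G)" unfolding snd_Qg by (intro UnI1 UnI2)
qed

lemma Qg_LR: "{Inl u, Inr a} \<in> snd (Qg G) \<longleftrightarrow> u \<in> fst G \<and> a \<in> snd G \<and> u \<in> a"
proof
  assume "{Inl u, Inr a} \<in> snd (Qg G)"
  then show "u \<in> fst G \<and> a \<in> snd G \<and> u \<in> a"
    by (cases rule: Qg_cases) (auto simp: doubleton_eq_iff)
next
  assume "u \<in> fst G \<and> a \<in> snd G \<and> u \<in> a"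
  then have "{Inl u, Inr a} \<in> {{Inl v, Inr e} |v e. v \<in> fst G \<and> e \<in> snd G \<and> v \<in> e}" by blast
  then show "{Inl u, Inr a} \<in> snd (Qg G)" unfolding snd_Qg by (intro UnI2)
qed

lemma Qg_RL: "{Inr a, Inl u} \<in> snd (Qg G) \<longleftrightarrow> u \<in> fst G \<and> a \<in> snd G \<and> u \<in> a"
proof -
  have "{Inr a, Inl u} = {Inl u, Inr a}" by blast
  then show ?thesis using Qg_LR by simp
qed



lemma clique_case:
  assumes wH: "wf_graph H" and wG: "wf_graph G"
    and S: "S \<subseteq> fst (Qg G)" and H': "H' = (S, {e\<in>snd (Qg G). e \<subseteq> S})"
    and f: "bij_betw f (fst H) (fst H')"
    and fe: "\<forall>u\<in>fst H. \<forall>v\<in>fst H. {u,v} \<in> snd H \<longleftrightarrow> {f u, f v} \<in> snd H'"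
    and V0: "\<forall>v. Inl v \<notin> S"
  shows "is_Qgraph H"
proof -
  have fH: "finite (fst H)" using wH unfolding wf_graph_def by auto
  have G0: "(fst H, {}) \<in> all_graphs" using fH unfolding all_graphs_def wf_graph_def by auto
  have fS: "\<And>x. x \<in> fst H \<Longrightarrow> f x \<in> S" using f H' unfolding bij_betw_def by auto
  have inj: "inj_on f (fst H)" using f unfolding bij_betw_def by auto
  have isR: "\<exists>d. f x = Inr d \<and> d \<in> snd G" if "x \<in> fst H" for x
  proof -
    have "f x \<in> fst (Qg G)" using fS that S by auto
    then show ?thesis using V0 fS[OF that] unfolding fst_Qg by auto
  qed
  have "{u,v} \<in> snd H \<longleftrightarrow> {Inl u, Inl v} \<in> snd (Qg (fst H, {}))" if uv: "u \<in> fst H" "v \<in> fst H" for u v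
  proof -
    obtain a b where ab: "f u = Inr a" "a \<in> snd G" "f v = Inr b" "b \<in> snd G" using isR uv by blast
    have "{u,v} \<in> snd H \<longleftrightarrow> {Inr a, Inr b} \<in> snd H'" using fe uv ab by auto
    also have "\<dots> \<longleftrightarrow> a \<noteq> b" using H' ab fS[OF uv(1)] fS[OF uv(2)] by (auto simp: Qg_RR)
    also have "\<dots> \<longleftrightarrow> u \<noteq> v" using inj uv ab by (metis sum.inject(2) inj_on_eq_iff)
    also have "\<dots> \<longleftrightarrow> {Inl u, Inl v} \<in> snd (Qg (fst H, {}))" using uv by (simp add: Qg_LL)
    finally show ?thesis .
  qed
  moreover have "bij_betw Inl (fst H) (fst (Qg (fst H, {})))"
    unfolding fst_Qg by (simp add: bij_betw_def inj_on_def)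
  ultimately have "graph_iso H (Qg (fst H, {}))" unfolding graph_iso_def by blast
  then show ?thesis using wH G0 unfolding is_Qgraph_def by blast
qed



lemma general_case:
  fixes H :: "nat graph" and G :: "nat graph" and X :: "nat graph set"
  assumes wH: "wf_graph H" and wG: "wf_graph G"
    and S: "S \<subseteq> fst (Qg G)" and H': "H' = (S, {e\<in>snd (Qg G). e \<subseteq> S})"
    and f: "bij_betw f (fst H) (fst H')"
    and fe: "\<forall>u\<in>fst H. \<forall>v\<in>fst H. {u,v} \<in> snd H \<longleftrightarrow> {f u, f v} \<in> snd H'"
    and v0: "Inl v0 \<in> S"
    and HX: "H \<in> X" and her: "hereditary X"
    and bound: "\<forall>G\<in>X. is_Qgraph G \<longrightarrow> clique_width G \<le> c"
  shows "cw_le (2*c+2) H"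
proof -
  define V' where "V' = {v. Inl v \<in> S}"
  define E' where "E' = {e. Inr e \<in> S}"
  define E2 where "E2 = {e\<in>E'. e \<subseteq> V'}"
  define A where "A = (Inl ` V' :: (nat + nat set) set)"
  define B where "B = (Inr ` E2 :: (nat + nat set) set)"
  define T where "T = A \<union> B"
  define R where "R = {x\<in>fst H. f x \<in> T}"
  define HR where "HR = (R, {e\<in>snd H. e \<subseteq> R})"
  define G2 where "G2 = (V', E2)"
  have SV: "\<And>v. Inl v \<in> S \<Longrightarrow> v \<in> fst G" and SE: "\<And>e. Inr e \<in> S \<Longrightarrow> e \<in> snd G"
    using S unfolding fst_Qg by auto
  have Sf: "S = f ` fst H" using f H' unfolding bij_betw_def by auto
  have fH: "finite (fst H)" using wH unfolding wf_graph_def by auto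
  have finS: "finite S" using Sf fH by auto
  have finV': "finite V'" unfolding V'_def using finite_vimageI[OF finS, of Inl] by (simp add: vimage_def)
  have finE': "finite E'" unfolding E'_def using finite_vimageI[OF finS, of Inr] by (simp add: vimage_def)
  have wG2: "wf_graph G2"
  proof -
    have "\<exists>u v. e = {u,v} \<and> u \<noteq> v \<and> u \<in> V' \<and> v \<in> V'" if "e \<in> E2" for e
    proof -
      have "e \<in> snd G" using that SE unfolding E2_def E'_def by auto
      then obtain u v where "e = {u,v}" "u \<noteq> v" using wG unfolding wf_graph_def by blast
      then show ?thesis using that unfolding E2_def by auto
    qed
    then show ?thesis using finV' unfolding wf_graph_def G2_def by auto
  qed
  have TS: "T \<subseteq> S" unfolding T_def A_def B_def V'_def E2_def E'_def by auto
  have fstQ2: "fst (Qg G2) = T" unfolding fst_Qg G2_def T_def A_def B_def by simp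
  have V'G: "V' \<subseteq> fst G" and E'G: "E' \<subseteq> snd G" using SV SE unfolding V'_def E'_def by auto
  have sndQ2: "snd (Qg G2) = {e\<in>snd (Qg G). e \<subseteq> T}"
  proof
    show "snd (Qg G2) \<subseteq> {e\<in>snd (Qg G). e \<subseteq> T}"
    proof
      fix e assume "e \<in> snd (Qg G2)"
      then show "e \<in> {e\<in>snd (Qg G). e \<subseteq> T}"
      proof (cases rule: Qg_cases)
        case (LL u v) then show ?thesis using V'G unfolding G2_def T_def A_def by (auto simp: Qg_LL)
      next
        case (RR a b) then show ?thesis using E'G unfolding G2_def T_def B_def E2_def by (auto simp: Qg_RR)
      next
        case (LR u a) then show ?thesis using V'G E'G unfolding G2_def T_def A_def B_def E2_def by (auto simp: Qg_LR)
      qed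
    qed
    show "{e\<in>snd (Qg G). e \<subseteq> T} \<subseteq> snd (Qg G2)"
    proof
      fix e assume e: "e \<in> {e\<in>snd (Qg G). e \<subseteq> T}"
      then have e1: "e \<in> snd (Qg G)" "e \<subseteq> T" by auto
      from e1(1) show "e \<in> snd (Qg G2)"
      proof (cases rule: Qg_cases)
        case (LL u v) then show ?thesis using e1(2) unfolding G2_def T_def A_def B_def by (auto simp: Qg_LL)
      next
        case (RR a b) then show ?thesis using e1(2) unfolding G2_def T_def A_def B_def by (auto simp: Qg_RR)
      next
        case (LR u a) then show ?thesis using e1(2) unfolding G2_def T_def A_def B_def by (auto simp: Qg_LR)
      qed
    qed
  qed
  have injf: "inj_on f (fst H)" using f unfolding bij_betw_def by auto
  have bijR: "bij_betw f R T"
  proof -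
    have "inj_on f R" using injf unfolding R_def by (auto intro: inj_on_subset)
    moreover have "f ` R = T"
    proof
      show "f ` R \<subseteq> T" unfolding R_def by auto
      show "T \<subseteq> f ` R"
      proof
        fix t assume t: "t \<in> T"
        then obtain x where "x \<in> fst H" "t = f x" using TS Sf by auto
        then show "t \<in> f ` R" using t unfolding R_def by auto
      qed
    qed
    ultimately show ?thesis unfolding bij_betw_def by auto
  qed
  have indHR: "induced_subgraph HR H" unfolding induced_subgraph_def HR_def R_def by auto
  have HRX: "HR \<in> X" using her HX indHR unfolding hereditary_def by blast
  have wHR: "wf_graph HR" using wf_induced[OF wH indHR] .
  have edR: "\<forall>u\<in>fst HR. \<forall>v\<in>fst HR. {u,v} \<in> snd HR \<longleftrightarrow> {f u, f v} \<in> snd (Qg G2)"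
  proof (intro ballI)
    fix u v assume uv: "u \<in> fst HR" "v \<in> fst HR"
    then have uv': "u \<in> fst H" "v \<in> fst H" "f u \<in> T" "f v \<in> T" unfolding HR_def R_def by auto
    have "{u,v} \<in> snd HR \<longleftrightarrow> {u,v} \<in> snd H" using uv unfolding HR_def by auto
    also have "\<dots> \<longleftrightarrow> {f u, f v} \<in> snd H'" using fe uv' by auto
    also have "\<dots> \<longleftrightarrow> {f u, f v} \<in> snd (Qg G2)" using uv' TS unfolding H' sndQ2 by auto
    finally show "{u,v} \<in> snd HR \<longleftrightarrow> {f u, f v} \<in> snd (Qg G2)" .
  qed
  have G2all: "G2 \<in> all_graphs" using wG2 unfolding all_graphs_def by auto
  have isQ: "is_Qgraph HR"
    unfolding is_Qgraph_def graph_iso_def using wHR G2all bijR edR fstQ2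
    by (auto simp: HR_def)
  have neHR: "fst HR \<noteq> {}"
  proof -
    have "Inl v0 \<in> T" using v0 unfolding T_def A_def V'_def by auto
    then obtain x where "x \<in> R" using bijR unfolding bij_betw_def by (metis imageE)
    then show ?thesis unfolding HR_def by auto
  qed
  have cwHR: "cw_le c HR"
    using cw_exists[OF wHR neHR] bound HRX isQ cw_le_mono by blast
  have cwQ2: "cw_le c (Qg G2)"
  proof (rule cw_le_transfer[OF cwHR])
    show "bij_betw f (fst HR) (fst (Qg G2))" using bijR fstQ2 unfolding HR_def by simp
    then show "snd (Qg G2) = (`) f ` snd HR"
      using iso_edges[OF wHR wf_Qg[OF wG2] _ edR] by simp
  qed
  then obtain l where cl: "cwl c (A \<union> B) (snd (Qg G2)) l"
    unfolding cw_le_iff fstQ2 T_def by auto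
  define P where "P = (Inr ` (E' - E2) :: (nat + nat set) set)"
  define F0 where "F0 = (Inr ` {e\<in>E' - E2. e \<inter> V' \<noteq> {}} :: (nat + nat set) set)"
  define h :: "nat + nat set \<Rightarrow> nat + nat set" where
    "h = case_sum Inl (\<lambda>e. if e \<inter> V' \<noteq> {} then Inl (SOME u. u \<in> e \<inter> V') else Inl v0)"
  have AB: "A \<inter> B = {}" unfolding A_def B_def by auto
  have PAB: "P \<inter> (A \<union> B) = {}" unfolding P_def A_def B_def by auto
  have finP: "finite P" unfolding P_def using finE' by auto
  have v0V: "v0 \<in> V'" using v0 unfolding V'_def by auto
  have hP: "\<forall>p\<in>P. h p \<in> A \<union> B"
  proof
    fix p assume "p \<in> P"
    then obtain e where e: "p = Inr e" unfolding P_def by auto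
    show "h p \<in> A \<union> B"
    proof (cases "e \<inter> V' \<noteq> {}")
      case True
      then have "(SOME u. u \<in> e \<inter> V') \<in> e \<inter> V'" by (metis (mono_tags) some_in_eq)
      then show ?thesis using True e unfolding h_def A_def by auto
    next
      case False then show ?thesis using e v0V unfolding h_def A_def by auto
    qed
  qed
  obtain m where cm: "cwl (2*c+2) (A \<union> B \<union> P) (snd (Qg G2) \<union> cliq P \<union> att F0 h P \<union> cross P B) m"
    using extend[OF cl AB PAB finP hP] by blast
  have hval: "h (Inr a) = Inl u" if a: "a \<in> E' - E2" "u \<in> a" "u \<in> V'" for a u
  proof -
    have "a \<in> snd G" using a E'G by auto
    then obtain x y where xy: "a = {x,y}" "x \<noteq> y" using wG unfolding wf_graph_def by blast
    have "\<not> a \<subseteq> V'" using a unfolding E2_def by auto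
    then have one: "a \<inter> V' = {u}" using xy a by auto
    then show ?thesis unfolding h_def by auto
  qed
  have vert: "A \<union> B \<union> P = S"
  proof
    show "A \<union> B \<union> P \<subseteq> S" unfolding A_def B_def P_def V'_def E'_def E2_def by auto
    show "S \<subseteq> A \<union> B \<union> P"
    proof
      fix x assume x: "x \<in> S"
      show "x \<in> A \<union> B \<union> P"
      proof (cases x)
        case (Inl v) then show ?thesis using x unfolding A_def V'_def by auto
      next
        case (Inr e) then show ?thesis using x unfolding B_def P_def E'_def by auto
      qed
    qed
  qed
  have edges: "snd (Qg G2) \<union> cliq P \<union> att F0 h P \<union> cross P B = snd H'"
  proof
    show "snd (Qg G2) \<union> cliq P \<union> att F0 h P \<union> cross P B \<subseteq> snd H'"
    proof -
      have "snd (Qg G2) \<subseteq> snd H'" unfolding sndQ2 H' using TS by auto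
      moreover have "cliq P \<subseteq> snd H'"
      proof
        fix e assume "e \<in> cliq P"
        then obtain a b where ab: "e = {Inr a, Inr b}" "a \<in> E'" "b \<in> E'" "a \<noteq> b"
          unfolding cliq_def P_def by auto
        then show "e \<in> snd H'" using E'G unfolding H' E'_def by (auto simp: Qg_RR)
      qed
      moreover have "att F0 h P \<subseteq> snd H'"
      proof
        fix e assume "e \<in> att F0 h P"
        then obtain a where a: "e = {Inr a, h (Inr a)}" "a \<in> E' - E2" "a \<inter> V' \<noteq> {}"
          unfolding att_def P_def F0_def by auto
        then obtain u where u: "u \<in> a" "u \<in> V'" by auto
        then have "e = {Inr a, Inl u}" using a hval by auto
        then show "e \<in> snd H'" using a u E'G V'G unfolding H' by (auto simp: Qg_RL E'_def V'_def)
      qed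
      moreover have "cross P B \<subseteq> snd H'"
      proof
        fix e assume "e \<in> cross P B"
        then obtain a b where ab: "e = {Inr a, Inr b}" "a \<in> E' - E2" "b \<in> E2"
          unfolding cross_def P_def B_def by auto
        then show "e \<in> snd H'" using E'G unfolding H' E2_def E'_def by (auto simp: Qg_RR)
      qed
      ultimately show ?thesis by blast
    qed
    show "snd H' \<subseteq> snd (Qg G2) \<union> cliq P \<union> att F0 h P \<union> cross P B"
    proof
      fix e assume "e \<in> snd H'"
      then have e: "e \<in> snd (Qg G)" "e \<subseteq> S" unfolding H' by auto
      from e(1) show "e \<in> snd (Qg G2) \<union> cliq P \<union> att F0 h P \<union> cross P B"
      proof (cases rule: Qg_cases)
        case (LL u v)
        then have "e \<subseteq> T" using e(2) unfolding T_def A_def V'_def by auto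
        then show ?thesis using e(1) unfolding sndQ2 by auto
      next
        case (RR a b)
        then have ab: "a \<in> E'" "b \<in> E'" using e(2) unfolding E'_def by auto
        show ?thesis
        proof (cases "a \<in> E2"; cases "b \<in> E2")
          assume "a \<in> E2" "b \<in> E2"
          then have "e \<subseteq> T" using RR unfolding T_def B_def by auto
          then show ?thesis using e(1) unfolding sndQ2 by auto
        next
          assume "a \<notin> E2" "b \<notin> E2"
          then have "e \<in> cliq P" using RR ab unfolding cliq_def P_def by blast
          then show ?thesis by auto
        next
          assume "a \<notin> E2" "b \<in> E2"
          then have "e \<in> cross P B" using RR ab unfolding cross_def P_def B_def by blast
          then show ?thesis by auto
        next
          assume "a \<in> E2" "b \<notin> E2"
          then have "{Inr b, Inr a} \<in> cross P B" using RR ab unfolding cross_def P_def B_def by blast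
          moreover have "{Inr b, Inr a} = e" using RR by blast
          ultimately show ?thesis by auto
        qed
      next
        case (LR u a)
        then have ua: "u \<in> V'" "a \<in> E'" using e(2) unfolding E'_def V'_def by auto
        show ?thesis
        proof (cases "a \<in> E2")
          case True
          then have "e \<subseteq> T" using LR ua unfolding T_def A_def B_def by auto
          then show ?thesis using e(1) unfolding sndQ2 by auto
        next
          case False
          then have hv: "h (Inr a) = Inl u" using hval ua LR by auto
          have "Inr a \<in> P \<inter> F0" using False ua LR unfolding P_def F0_def by auto
          then have "{Inr a, h (Inr a)} \<in> att F0 h P" unfolding att_def by blast
          moreover have "{Inr a, h (Inr a)} = e" unfolding hv LR(1) by blast
          ultimately show ?thesis by auto
        qed
      qed
    qed
  qed
  have cwH': "cw_le (2*c+2) H'"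
    unfolding cw_le_iff using cm vert edges H' by auto
  define g where "g = inv_into (fst H) f"
  have bg: "bij_betw g (fst H') (fst H)" unfolding g_def by (rule bij_betw_inv_into[OF f])
  have wH': "wf_graph H'"
    using wf_induced[OF wf_Qg[OF wG]] S H' unfolding induced_subgraph_def by auto
  have "\<forall>x\<in>fst H'. \<forall>y\<in>fst H'. {x,y} \<in> snd H' \<longleftrightarrow> {g x, g y} \<in> snd H"
  proof (intro ballI)
    fix x y assume xy: "x \<in> fst H'" "y \<in> fst H'"
    have gx: "g x \<in> fst H" "g y \<in> fst H" using bg xy unfolding bij_betw_def by auto
    have fg: "f (g x) = x" "f (g y) = y" using xy f unfolding g_def bij_betw_def
      by (auto intro: f_inv_into_f)
    show "{x,y} \<in> snd H' \<longleftrightarrow> {g x, g y} \<in> snd H" using fe gx fg by auto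
  qed
  then have "snd H = (`) g ` snd H'" using iso_edges[OF wH' wH bg] by simp
  then show ?thesis using cw_le_transfer[OF cwH' bg] by simp
qed



theorem lemma4p2:
  fixes X :: "nat graph set"
  assumes "hereditary X" and "X \<subseteq> Qstar_all"
  shows "(\<exists>c. \<forall>G\<in>X. clique_width G \<le> c) \<longleftrightarrow>
         (\<exists>c. \<forall>G\<in>X. is_Qgraph G \<longrightarrow> clique_width G \<le> c)"
proof
  assume "\<exists>c. \<forall>G\<in>X. clique_width G \<le> c"
  then show "\<exists>c. \<forall>G\<in>X. is_Qgraph G \<longrightarrow> clique_width G \<le> c" by blast
next
  assume "\<exists>c. \<forall>G\<in>X. is_Qgraph G \<longrightarrow> clique_width G \<le> c"
  then obtain c where bound: "\<forall>G\<in>X. is_Qgraph G \<longrightarrow> clique_width G \<le> c" by blast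
  define K where "K = max (2*c+2) (max c (clique_width (({}::nat set), ({}::nat set set))))"
  show "\<exists>c. \<forall>G\<in>X. clique_width G \<le> c"
  proof (intro exI ballI)
    fix H assume HX: "H \<in> X"
    then have "H \<in> Qstar_all" using assms(2) by auto
    then obtain G H' where wH: "wf_graph H" and G: "G \<in> all_graphs"
      and ind: "induced_subgraph H' (Qg G)" and iso: "graph_iso H H'"
      unfolding Qstar_all_def by blast
    have wG: "wf_graph G" using G unfolding all_graphs_def by auto
    obtain S where S: "S \<subseteq> fst (Qg G)" "H' = (S, {e\<in>snd (Qg G). e \<subseteq> S})"
      using ind unfolding induced_subgraph_def by auto
    obtain f where f: "bij_betw f (fst H) (fst H')"
      and fe: "\<forall>u\<in>fst H. \<forall>v\<in>fst H. {u,v} \<in> snd H \<longleftrightarrow> {f u, f v} \<in> snd H'"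
      using iso unfolding graph_iso_def by blast
    show "clique_width H \<le> K"
    proof (cases "fst H = {}")
      case True
      then have "snd H = {}" using wH unfolding wf_graph_def by auto
      then have "H = ({}, {})" using True by (cases H) auto
      then show ?thesis unfolding K_def by simp
    next
      case False
      show ?thesis
      proof (cases "\<exists>v0. Inl v0 \<in> S")
        case True
        then obtain v0 where "Inl v0 \<in> S" by blast
        from general_case[OF wH wG S f fe this HX assms(1) bound]
        have "clique_width H \<le> 2*c+2" by (rule cw_le_cw)
        then show ?thesis unfolding K_def by simp
      next
        case False
        then have "is_Qgraph H" using clique_case[OF wH wG S f fe] by blast
        then have "clique_width H \<le> c" using bound HX by blast
        then show ?thesis unfolding K_def by simp
      qed
    qed
  qed
qed


end
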